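(* The mould $\mathsf{dupal}$, defined by $\mathsf{dupal}^0=0$ and, for $m\ge1$, \[ \mathsf{dupal}^m(x_1,\dots,x_m)=\frac{B_m}{m!}\frac{1}{x_1\cdots x_m}\sum_{k=0}^{m-1}(-1)^k\binom{m-1}{k}x_{k+1}, \] is alternal.
   Context: $B_m$ are the Bernoulli numbers, $\frac{x}{e^x-1}=\sum_{m\ge0}\frac{B_m}{m!}x^m$. A mould is a family $A=(A^m(x_1,\dots,x_m))_{m\ge0}$ with $A^m\in\mathbb{Q}((x_1,\dots,x_m))$, extended linearly to formal linear combinations of words. Shuffle product: $\emptyset\,\text{ш}\,\omega=\omega\,\text{ш}\,\emptyset=\omega$, $a\omega\,\text{ш}\,b\eta=a(\omega\,\text{ш}\,b\eta)+b(a\omega\,\text{ш}\,\eta)$. A mould $A$ with $A^0=0$ is alternal if $A^{p+q}\bigl((x_1,\dots,x_p)\,\text{ш}\,(x_{p+1},\dots,x_{p+q})\bigr)=0$ for all $p,q\ge1$. *)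

theory Defs
  imports "HOL-Computational_Algebra.Formal_Power_Series"
begin

definition bernoulli :: "nat \<Rightarrow> rat" where
  "bernoulli m = fact m * fps_nth (fps_X / (fps_exp 1 - 1)) m"

fun shuffle :: "'a list \<Rightarrow> 'a list \<Rightarrow> 'a list list" where
  "shuffle [] ys = [ys]"
| "shuffle xs [] = [xs]"
| "shuffle (a # xs) (b # ys) =
     map ((#) a) (shuffle xs (b # ys)) @ map ((#) b) (shuffle (a # xs) ys)"

text \<open>A mould is represented by its evaluation: a word (x_1,...,x_m) of values is sent to
  A^m(x_1,...,x_m). Alternality: A^0 = 0 and A vanishes on every shuffle of two nonempty
  words, at all points where the components are defined (all variables nonzero).\<close>
definition alternal :: "(rat list \<Rightarrow> rat) \<Rightarrow> bool" where
  "alternal A \<longleftrightarrow> A [] = 0 \<and>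
     (\<forall>xs ys. xs \<noteq> [] \<longrightarrow> ys \<noteq> [] \<longrightarrow> (\<forall>x \<in> set (xs @ ys). x \<noteq> 0) \<longrightarrow>
        sum_list (map A (shuffle xs ys)) = 0)"

definition dupal :: "rat list \<Rightarrow> rat" where
  "dupal xs = (let m = length xs in
     if m = 0 then 0
     else bernoulli m / fact m * (1 / prod_list xs) *
          (\<Sum>k = 0..m-1. (-1) ^ k * of_nat ((m - 1) choose k) * xs ! k))"

end

theory Submission
  imports Defs
begin

definition LL :: "nat \<Rightarrow> rat list \<Rightarrow> rat" where
  "LL n w = (\<Sum>k<length w. (-1) ^ k * of_nat (n choose k) * w ! k)"

definition HH :: "nat \<Rightarrow> rat list \<Rightarrow> rat list \<Rightarrow> rat" where
  "HH n xs ys = sum_list (map (LL n) (shuffle xs ys))"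

lemma LL_Nil[simp]: "LL n [] = 0"
  by (simp add: LL_def)

lemma LL_0_Cons: "LL 0 (x # w) = x"
proof -
  have "LL 0 (x # w) = (\<Sum>k<Suc (length w). (-1) ^ k * of_nat (0 choose k) * (x # w) ! k)"
    by (simp add: LL_def)
  also have "\<dots> = x"
    by (subst sum.lessThan_Suc_shift) simp
  finally show ?thesis .
qed

lemma LL_Cons: "LL n (x # w) = x + (\<Sum>k<length w. (-1) ^ Suc k * of_nat (n choose Suc k) * w ! k)"
proof -
  have "LL n (x # w) = (\<Sum>k<Suc (length w). (-1) ^ k * of_nat (n choose k) * (x # w) ! k)"
    by (simp add: LL_def del: sum.lessThan_Suc)
  also have "\<dots> = x + (\<Sum>k<length w. (-1) ^ Suc k * of_nat (n choose Suc k) * w ! k)"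
    by (subst sum.lessThan_Suc_shift) (simp del: binomial_Suc_Suc)
  finally show ?thesis .
qed

lemma LL_Suc_Cons: "LL (Suc n) (x # w) = LL n (x # w) - LL n w"
proof -
  have "LL (Suc n) (x # w) = x + (\<Sum>k<length w. (-1) ^ Suc k * of_nat (n choose Suc k) * w ! k)
      - (\<Sum>k<length w. (-1) ^ k * of_nat (n choose k) * w ! k)"
    unfolding LL_Cons
    by (simp add: sum_subtractf[symmetric] sum.distrib[symmetric] algebra_simps)
  then show ?thesis unfolding LL_Cons by (simp add: LL_def)
qed

lemma sum_list_map_Cons_LL_Suc:
  "sum_list (map (\<lambda>w. LL (Suc n) (x # w)) A) = sum_list (map (\<lambda>w. LL n (x # w)) A) - sum_list (map (LL n) A)"
  by (induction A) (auto simp: LL_Suc_Cons)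

lemma sum_list_map_Cons_LL_0:
  "sum_list (map (\<lambda>w. LL 0 (x # w)) A) = of_nat (length A) * x"
  by (induction A) (auto simp: LL_0_Cons algebra_simps)

lemma length_shuffle: "length (shuffle xs ys) = (length xs + length ys) choose length xs"
  by (induction xs ys rule: shuffle.induct) auto

lemma shuffle_mset: "w \<in> set (shuffle xs ys) \<Longrightarrow> mset w = mset xs + mset ys"
  by (induction xs ys arbitrary: w rule: shuffle.induct) auto

lemma HH_Cons_Cons_Suc:
  "HH (Suc n) (x # xs) (y # ys) = HH n (x # xs) (y # ys) - HH n xs (y # ys) - HH n (x # xs) ys"
  unfolding HH_def by (simp add: comp_def sum_list_map_Cons_LL_Suc)

lemma HH_Cons_Cons_0:
  "HH 0 (x # xs) (y # ys) = of_nat ((length xs + Suc (length ys)) choose length xs) * x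
     + of_nat ((Suc (length xs) + length ys) choose Suc (length xs)) * y"
  unfolding HH_def by (simp add: comp_def sum_list_map_Cons_LL_0 length_shuffle)

lemma HH_formula:
  "n < length xs + length ys \<Longrightarrow>
   HH n xs ys = of_nat ((length xs + length ys - 1 - n) choose length ys) * LL n xs
              + of_nat ((length xs + length ys - 1 - n) choose length xs) * LL n ys"
proof (induction n arbitrary: xs ys)
  case 0
  show ?case
  proof (cases xs)
    case Nil then show ?thesis by (simp add: HH_def)
  next
    case (Cons x xs')
    show ?thesis
    proof (cases ys)
      case Nil then show ?thesis using Cons by (simp add: HH_def)
    next
      case (Cons y ys')
      have e1: "Suc (length xs' + length ys') choose length xs' = Suc (length xs' + length ys') choose Suc (length ys')"
        using binomial_symmetric[of "length xs'" "Suc (length xs' + length ys')"] by simp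
      have e2: "(Suc (length xs') + length ys') choose Suc (length xs') = (length xs' + Suc (length ys')) choose Suc (length xs')"
        by simp
      show ?thesis using \<open>xs = x # xs'\<close> Cons
        by (simp add: HH_Cons_Cons_0 LL_0_Cons e1 del: binomial_Suc_Suc)
    qed
  qed
next
  case (Suc n)
  show ?case
  proof (cases xs)
    case Nil then show ?thesis by (simp add: HH_def)
  next
    case (Cons x xs')
    show ?thesis
    proof (cases ys)
      case Nil then show ?thesis using Cons by (simp add: HH_def)
    next
      case (Cons y ys')
      define a where "a = length xs'"
      define b where "b = length ys'"
      define t where "t = a + b - n"
      have nle: "n \<le> a + b" using Suc.prems \<open>xs = x # xs'\<close> Cons a_def b_def by simp
      have I1: "HH n (x # xs') (y # ys') = of_nat (Suc t choose Suc b) * LL n (x # xs') + of_nat (Suc t choose Suc a) * LL n (y # ys')"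
        using Suc.IH[of "x # xs'" "y # ys'"] nle unfolding t_def a_def b_def
        by (simp del: binomial_Suc_Suc add: Suc_diff_le)
      have I2: "HH n xs' (y # ys') = of_nat (t choose Suc b) * LL n xs' + of_nat (t choose a) * LL n (y # ys')"
        using Suc.IH[of "xs'" "y # ys'"] nle unfolding t_def a_def b_def
        by (simp del: binomial_Suc_Suc)
      have I3: "HH n (x # xs') ys' = of_nat (t choose b) * LL n (x # xs') + of_nat (t choose Suc a) * LL n ys'"
        using Suc.IH[of "x # xs'" "ys'"] nle unfolding t_def a_def b_def
        by (simp del: binomial_Suc_Suc)
      have G: "HH (Suc n) (x # xs') (y # ys') = of_nat (t choose Suc b) * LL (Suc n) (x # xs') + of_nat (t choose Suc a) * LL (Suc n) (y # ys')"
        unfolding HH_Cons_Cons_Suc I1 I2 I3 LL_Suc_Cons binomial_Suc_Suc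
        by (simp add: algebra_simps)
      show ?thesis using G \<open>xs = x # xs'\<close> Cons unfolding t_def a_def b_def
        by (simp del: binomial_Suc_Suc)
    qed
  qed
qed

lemma HH_zero:
  assumes "xs \<noteq> []" "ys \<noteq> []"
  shows "HH (length xs + length ys - 1) xs ys = 0"
  using HH_formula[of "length xs + length ys - 1" xs ys] assms
  by (cases xs; cases ys) simp_all

lemma dupal_eq:
  "length w = m \<Longrightarrow> m > 0 \<Longrightarrow> dupal w = bernoulli m / fact m * (1 / prod_list w) * LL (m - 1) w"
  unfolding dupal_def LL_def Let_def
  by (simp add: atLeast0AtMost lessThan_Suc_atMost[symmetric])

theorem proposition1p30:
  shows "alternal dupal"
  unfolding alternal_def
proof (intro conjI allI impI)
  show "dupal [] = 0" by (simp add: dupal_def)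
next
  fix xs ys :: "rat list"
  assume xs: "xs \<noteq> []" and ys: "ys \<noteq> []" and nz: "\<forall>x\<in>set (xs @ ys). x \<noteq> 0"
  define m where "m = length xs + length ys"
  define c where "c = bernoulli m / fact m * (1 / prod_list (xs @ ys))"
  have m0: "m > 0" using xs m_def by simp
  have "map dupal (shuffle xs ys) = map (\<lambda>w. c * LL (m - 1) w) (shuffle xs ys)"
  proof (rule map_cong[OF refl])
    fix w assume w: "w \<in> set (shuffle xs ys)"
    have ms: "mset w = mset (xs @ ys)" using shuffle_mset[OF w] by simp
    hence len: "length w = m" unfolding m_def by (metis length_append size_mset)
    have "prod_list w = prod_list (xs @ ys)"
      using ms by (metis prod_mset_prod_list)
    then show "dupal w = c * LL (m - 1) w"
      using dupal_eq[OF len m0] unfolding c_def by simp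
  qed
  hence "sum_list (map dupal (shuffle xs ys)) = sum_list (map (\<lambda>w. c * LL (m - 1) w) (shuffle xs ys))"
    by (rule arg_cong)
  also have "\<dots> = c * HH (m - 1) xs ys"
    unfolding HH_def by (rule sum_list_const_mult)
  also have "\<dots> = 0" using HH_zero[OF xs ys] unfolding m_def by simp
  finally show "sum_list (map dupal (shuffle xs ys)) = 0" .
qed

end
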